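(* Let $U$ be a general quantum walk on a finite graph $G=(V,E)$ with auxiliary space of dimension $d$, such that for every basis state $|a,v\rangle$ the limiting distribution $\pi(\cdot|a,v)$ equals a fixed distribution $\pi$ (necessarily uniform). Let $\epsilon>0$ with $M=M_\epsilon<\infty$. An amplification step from vertex $v$ consists of: choosing $a\in\{1,\dots,d\}$ uniformly at random and $t\in\{0,\dots,M-1\}$ uniformly at random, preparing $|a,v\rangle$, applying $U^t$, and measuring the vertex. Starting from an arbitrary vertex $v_0$ and performing $k\ge1$ successive amplification steps (each starting from the vertex measured at the end of the previous one), the distribution $D_k$ of the final measured vertex satisfies $\|D_k-\pi\|\le\epsilon^k$.
   Context: $\mathcal H=\mathcal H_A\otimes\mathcal H_V$ with basis $|a,v\rangle$. A general quantum walk on $G$ is a unitary $U$ with $U|a,v\rangle$ supported on $|a',v'\rangle$ with $v'=v$ or $v'$ adjacent to $v$. $P_t(\cdot|a,v)$ is the vertex distribution of $U^t|a,v\rangle$, $\bar P_T=\frac1T\sum_{t=0}^{T-1}P_t$, $\pi(\cdot|a,v)=\lim_T\bar P_T(\cdot|a,v)$. Total variation $\|d_1-d_2\|=\sum_v|d_1(v)-d_2(v)|$. Mixing time $M_\epsilon=\min\{T\ge1:\forall t\ge T,\forall|a,v\rangle:\ \|\pi(\cdot|a,v)-\bar P_t(\cdot|a,v)\|\le\epsilon\}$. *)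

theory Defs
  imports Complex_Main
begin

text \<open>A general quantum walk is represented by its matrix
  U :: ('a \<times> 'v) \<Rightarrow> ('a \<times> 'v) \<Rightarrow> complex, where U x y is the amplitude
  of basis state x in U|y>.  'a is the (finite) auxiliary index type
  (d = CARD('a)), 'v the finite vertex type.\<close>

definition unitary_mat :: "('i::finite \<Rightarrow> 'i \<Rightarrow> complex) \<Rightarrow> bool" where
  "unitary_mat U \<longleftrightarrow>
     (\<forall>i j. (\<Sum>k\<in>UNIV. cnj (U k i) * U k j) = (if i = j then 1 else 0)) \<and>
     (\<forall>i j. (\<Sum>k\<in>UNIV. U i k * cnj (U j k)) = (if i = j then 1 else 0))"

definition simple_graph :: "('v \<Rightarrow> 'v \<Rightarrow> bool) \<Rightarrow> bool" where
  "simple_graph E \<longleftrightarrow> (\<forall>u v. E u v \<longrightarrow> E v u) \<and> (\<forall>v. \<not> E v v)"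

definition general_quantum_walk ::
  "('v \<Rightarrow> 'v \<Rightarrow> bool) \<Rightarrow> (('a::finite \<times> 'v::finite) \<Rightarrow> ('a \<times> 'v) \<Rightarrow> complex) \<Rightarrow> bool" where
  "general_quantum_walk E U \<longleftrightarrow> unitary_mat U \<and>
     (\<forall>a v a' v'. U (a', v') (a, v) \<noteq> 0 \<longrightarrow> v' = v \<or> E v v')"

fun walk_state :: "(('a::finite \<times> 'v::finite) \<Rightarrow> ('a \<times> 'v) \<Rightarrow> complex) \<Rightarrow> nat \<Rightarrow> 'a \<Rightarrow> 'v \<Rightarrow> ('a \<times> 'v) \<Rightarrow> complex" where
  "walk_state U 0 a v = (\<lambda>x. if x = (a, v) then 1 else 0)"
| "walk_state U (Suc t) a v = (\<lambda>x. \<Sum>y\<in>UNIV. U x y * walk_state U t a v y)"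

definition Pt :: "(('a::finite \<times> 'v::finite) \<Rightarrow> ('a \<times> 'v) \<Rightarrow> complex) \<Rightarrow> nat \<Rightarrow> 'a \<Rightarrow> 'v \<Rightarrow> 'v \<Rightarrow> real" where
  "Pt U t a v w = (\<Sum>a'\<in>UNIV. (cmod (walk_state U t a v (a', w)))\<^sup>2)"

definition Pbar :: "(('a::finite \<times> 'v::finite) \<Rightarrow> ('a \<times> 'v) \<Rightarrow> complex) \<Rightarrow> nat \<Rightarrow> 'a \<Rightarrow> 'v \<Rightarrow> 'v \<Rightarrow> real" where
  "Pbar U T a v w = (1 / real T) * (\<Sum>t<T. Pt U t a v w)"

definition tv :: "('v::finite \<Rightarrow> real) \<Rightarrow> ('v \<Rightarrow> real) \<Rightarrow> real" where
  "tv d1 d2 = (\<Sum>v\<in>UNIV. \<bar>d1 v - d2 v\<bar>)"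

text \<open>Mixing time w.r.t. the limiting distribution pi(.|a,v) = limd a v.\<close>
definition mixing_set :: "(('a::finite \<times> 'v::finite) \<Rightarrow> ('a \<times> 'v) \<Rightarrow> complex) \<Rightarrow> ('a \<Rightarrow> 'v \<Rightarrow> 'v \<Rightarrow> real) \<Rightarrow> real \<Rightarrow> nat set" where
  "mixing_set U limd \<epsilon> = {T. T \<ge> 1 \<and> (\<forall>t\<ge>T. \<forall>a v. tv (limd a v) (Pbar U t a v) \<le> \<epsilon>)}"

definition mixing_time :: "(('a::finite \<times> 'v::finite) \<Rightarrow> ('a \<times> 'v) \<Rightarrow> complex) \<Rightarrow> ('a \<Rightarrow> 'v \<Rightarrow> 'v \<Rightarrow> real) \<Rightarrow> real \<Rightarrow> nat" where
  "mixing_time U limd \<epsilon> = (LEAST T. T \<in> mixing_set U limd \<epsilon>)"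

definition amp_kernel :: "(('a::finite \<times> 'v::finite) \<Rightarrow> ('a \<times> 'v) \<Rightarrow> complex) \<Rightarrow> nat \<Rightarrow> 'v \<Rightarrow> 'v \<Rightarrow> real" where
  "amp_kernel U M v w = (\<Sum>a::'a\<in>UNIV. (1 / real (card (UNIV::'a set))) * (\<Sum>t<M. (1 / real M) * Pt U t a v w))"

fun amp_dist :: "(('a::finite \<times> 'v::finite) \<Rightarrow> ('a \<times> 'v) \<Rightarrow> complex) \<Rightarrow> nat \<Rightarrow> 'v \<Rightarrow> nat \<Rightarrow> 'v \<Rightarrow> real" where
  "amp_dist U M v0 0 = (\<lambda>w. if w = v0 then 1 else 0)"
| "amp_dist U M v0 (Suc k) = (\<lambda>w. \<Sum>v\<in>UNIV. amp_dist U M v0 k v * amp_kernel U M v w)"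

end

theory Submission imports Defs begin

lemma sum_rot3:
  fixes F :: "'i::finite \<Rightarrow> 'j::finite \<Rightarrow> 'k::finite \<Rightarrow> 'r::comm_monoid_add"
  shows "(\<Sum>x\<in>UNIV. \<Sum>y\<in>UNIV. \<Sum>z\<in>UNIV. F x y z) = (\<Sum>y\<in>UNIV. \<Sum>z\<in>UNIV. \<Sum>x\<in>UNIV. F x y z)"
proof -
  have "(\<Sum>x\<in>UNIV. \<Sum>y\<in>UNIV. \<Sum>z\<in>UNIV. F x y z) = (\<Sum>y\<in>UNIV. \<Sum>x\<in>UNIV. \<Sum>z\<in>UNIV. F x y z)"
    by (rule sum.swap)
  also have "\<dots> = (\<Sum>y\<in>UNIV. \<Sum>z\<in>UNIV. \<Sum>x\<in>UNIV. F x y z)"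
    by (rule sum.cong, simp, rule sum.swap)
  finally show ?thesis .
qed

lemma unit_col:
  fixes U :: "'i::finite \<Rightarrow> 'i \<Rightarrow> complex"
  assumes "unitary_mat U"
  shows "(\<Sum>x\<in>UNIV. cnj (\<Sum>y\<in>UNIV. U x y * f y) * (\<Sum>z\<in>UNIV. U x z * g z)) = (\<Sum>y\<in>UNIV. cnj (f y) * g y)"
proof -
  have "(\<Sum>x\<in>UNIV. cnj (\<Sum>y\<in>UNIV. U x y * f y) * (\<Sum>z\<in>UNIV. U x z * g z))
      = (\<Sum>x\<in>UNIV. \<Sum>y\<in>UNIV. \<Sum>z\<in>UNIV. (cnj (f y) * g z) * (cnj (U x y) * U x z))"
    by (simp add: cnj_sum sum_distrib_left sum_distrib_right mult_ac)
  also have "\<dots> = (\<Sum>y\<in>UNIV. \<Sum>z\<in>UNIV. (cnj (f y) * g z) * (\<Sum>x\<in>UNIV. cnj (U x y) * U x z))"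
    by (subst sum_rot3) (simp add: sum_distrib_left)
  also have "\<dots> = (\<Sum>y\<in>UNIV. cnj (f y) * g y)"
  proof -
    have h: "\<And>y z. (\<Sum>x\<in>UNIV. cnj (U x y) * U x z) = (if y = z then 1 else 0)"
      using assms unfolding unitary_mat_def by blast
    show ?thesis by (simp only: h) (simp add: if_distrib sum.delta cong: if_cong)
  qed
  finally show ?thesis .
qed

lemma unit_row:
  fixes U :: "'i::finite \<Rightarrow> 'i \<Rightarrow> complex" and M :: "'i \<Rightarrow> 'j::finite \<Rightarrow> complex"
  assumes "unitary_mat U" and "\<And>z z'. (\<Sum>y\<in>UNIV. M z y * cnj (M z' y)) = (if z = z' then 1 else 0)"
  shows "(\<Sum>y\<in>UNIV. (\<Sum>z\<in>UNIV. U x z * M z y) * cnj (\<Sum>z'\<in>UNIV. U x' z' * M z' y)) = (if x = x' then 1 else 0)"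
proof -
  have "(\<Sum>y\<in>UNIV. (\<Sum>z\<in>UNIV. U x z * M z y) * cnj (\<Sum>z'\<in>UNIV. U x' z' * M z' y))
      = (\<Sum>y\<in>UNIV. \<Sum>z\<in>UNIV. \<Sum>z'\<in>UNIV. (U x z * cnj (U x' z')) * (M z y * cnj (M z' y)))"
    apply (simp add: cnj_sum sum_distrib_left sum_distrib_right mult_ac)
    apply (rule sum.cong, simp, rule sum.swap)
    done
  also have "\<dots> = (\<Sum>z\<in>UNIV. \<Sum>z'\<in>UNIV. (U x z * cnj (U x' z')) * (\<Sum>y\<in>UNIV. M z y * cnj (M z' y)))"
    by (subst sum_rot3) (simp add: sum_distrib_left)
  also have "\<dots> = (\<Sum>z\<in>UNIV. U x z * cnj (U x' z))"
    by (simp only: assms(2)) (simp add: if_distrib sum.delta cong: if_cong)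
  also have "\<dots> = (if x = x' then 1 else 0)"
    using assms(1) unfolding unitary_mat_def by blast
  finally show ?thesis .
qed

lemma ws_col:
  assumes "unitary_mat U"
  shows "(\<Sum>x\<in>UNIV. cnj (walk_state U t a v x) * walk_state U t b u x) = (if (a,v) = (b,u) then 1 else 0)"
proof (induction t)
  case 0
  have "\<And>x. cnj (walk_state U 0 a v x) * walk_state U 0 b u x = (if x = (a,v) then (if (a,v) = (b,u) then 1 else 0) else 0)"
    by auto
  then show ?case by simp
next
  case (Suc t)
  then show ?case using unit_col[OF assms] by simp
qed

lemma ws_row:
  assumes "unitary_mat U"
  shows "(\<Sum>y\<in>UNIV. walk_state U t (fst y) (snd y) x * cnj (walk_state U t (fst y) (snd y) x')) = (if x = x' then 1 else 0)"
proof (induction t arbitrary: x x')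
  case 0
  have "\<And>y. walk_state U 0 (fst y) (snd y) x * cnj (walk_state U 0 (fst y) (snd y) x') = (if y = x then (if x = x' then 1 else 0) else 0)"
    by auto
  then show ?case by simp
next
  case (Suc t)
  show ?case using unit_row[OF assms, of "\<lambda>z y. walk_state U t (fst y) (snd y) z"] Suc by simp
qed

lemma cmod_sq: "complex_of_real ((cmod z)\<^sup>2) = z * cnj z"
  using complex_norm_square by auto
lemma cmod_sq': "(complex_of_real (cmod z))\<^sup>2 = z * cnj z"
  using complex_norm_square by auto

lemma Pt_sum1:
  assumes "unitary_mat U"
  shows "(\<Sum>w\<in>UNIV. Pt U t a v w) = 1"
proof -
  have "complex_of_real (\<Sum>w\<in>UNIV. Pt U t a v w) = (\<Sum>x\<in>UNIV. cnj (walk_state U t a v x) * walk_state U t a v x)"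
    unfolding Pt_def by (simp add: cmod_sq' mult.commute sum.cartesian_product' flip: UNIV_Times_UNIV) (subst sum.swap, simp)
  moreover have "(\<Sum>x\<in>UNIV. cnj (walk_state U t a v x) * walk_state U t a v x) = 1"
    using ws_col[OF assms, of t a v a v] by simp
  ultimately show ?thesis by (metis of_real_eq_1_iff)
qed

lemma Pt_colsum:
  fixes U :: "('a::finite \<times> 'v::finite) \<Rightarrow> ('a \<times> 'v) \<Rightarrow> complex"
  assumes "unitary_mat U"
  shows "(\<Sum>a\<in>UNIV. \<Sum>v\<in>UNIV. Pt U t a v w) = real (card (UNIV::'a set))"
proof -
  have "complex_of_real (\<Sum>a\<in>UNIV. \<Sum>v\<in>UNIV. Pt U t a v w) = (\<Sum>a'\<in>UNIV. \<Sum>y\<in>UNIV. walk_state U t (fst y) (snd y) (a', w) * cnj (walk_state U t (fst y) (snd y) (a',w)))"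
  proof -
    have "complex_of_real (\<Sum>a\<in>UNIV. \<Sum>v\<in>UNIV. Pt U t a v w) = (\<Sum>a\<in>UNIV. \<Sum>v\<in>UNIV. \<Sum>a'\<in>UNIV. walk_state U t a v (a', w) * cnj (walk_state U t a v (a',w)))"
      unfolding Pt_def by (simp add: cmod_sq cmod_sq')
    also have "\<dots> = (\<Sum>y\<in>UNIV. \<Sum>a'\<in>UNIV. walk_state U t (fst y) (snd y) (a', w) * cnj (walk_state U t (fst y) (snd y) (a',w)))"
      by (simp add: sum.cartesian_product' flip: UNIV_Times_UNIV)
    also have "\<dots> = (\<Sum>a'\<in>UNIV. \<Sum>y\<in>UNIV. walk_state U t (fst y) (snd y) (a', w) * cnj (walk_state U t (fst y) (snd y) (a',w)))"
      by (rule sum.swap)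
    finally show ?thesis .
  qed
  also have "\<dots> = of_nat (card (UNIV::'a set))" using ws_row[OF assms] by simp
  finally show ?thesis by (metis of_real_of_nat_eq of_real_eq_iff)
qed


lemma sum_rot3S:
  "(\<Sum>x\<in>A. \<Sum>y\<in>B. \<Sum>z\<in>C. F x y z) = (\<Sum>y\<in>B. \<Sum>z\<in>C. \<Sum>x\<in>A. F x y z)"
proof -
  have "(\<Sum>x\<in>A. \<Sum>y\<in>B. \<Sum>z\<in>C. F x y z) = (\<Sum>y\<in>B. \<Sum>x\<in>A. \<Sum>z\<in>C. F x y z)"
    by (rule sum.swap)
  also have "\<dots> = (\<Sum>y\<in>B. \<Sum>z\<in>C. \<Sum>x\<in>A. F x y z)"
    by (rule sum.cong, simp, rule sum.swap)
  finally show ?thesis .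
qed

lemma Pbar_sum1:
  assumes "unitary_mat U" "T \<ge> 1"
  shows "(\<Sum>w\<in>UNIV. Pbar U T a v w) = 1"
proof -
  have "(\<Sum>w\<in>UNIV. Pbar U T a v w) = (1 / real T) * (\<Sum>t<T. \<Sum>w\<in>UNIV. Pt U t a v w)"
    unfolding Pbar_def by (simp add: sum_distrib_left) (rule sum.swap)
  also have "\<dots> = 1" using Pt_sum1[OF assms(1)] assms(2) by simp
  finally show ?thesis .
qed

lemma Pbar_colsum:
  fixes U :: "('a::finite \<times> 'v::finite) \<Rightarrow> ('a \<times> 'v) \<Rightarrow> complex"
  assumes "unitary_mat U" "T \<ge> 1"
  shows "(\<Sum>a\<in>UNIV. \<Sum>v\<in>UNIV. Pbar U T a v w) = real (card (UNIV::'a set))"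
proof -
  have "(\<Sum>a\<in>UNIV. \<Sum>v\<in>UNIV. Pbar U T a v w) = (1 / real T) * (\<Sum>t<T. \<Sum>a\<in>UNIV. \<Sum>v\<in>UNIV. Pt U t a v w)"
    unfolding Pbar_def by (simp add: sum_distrib_left) (rule sum_rot3S[symmetric])
  also have "\<dots> = real (card (UNIV::'a set))" using Pt_colsum[OF assms(1)] assms(2) by simp
  finally show ?thesis .
qed

lemma contract:
  fixes K :: "'v::finite \<Rightarrow> 'v \<Rightarrow> real"
  assumes stat: "\<And>w. (\<Sum>v\<in>UNIV. p v * K v w) = p w"
    and tvK: "\<And>v. (\<Sum>w\<in>UNIV. \<bar>K v w - p w\<bar>) \<le> e"
    and sD: "(\<Sum>v\<in>UNIV. D v) = 1" and sp: "(\<Sum>v\<in>UNIV. p v) = 1"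
  shows "(\<Sum>w\<in>UNIV. \<bar>(\<Sum>v\<in>UNIV. D v * K v w) - p w\<bar>) \<le> e * (\<Sum>v\<in>UNIV. \<bar>D v - p v\<bar>)"
proof -
  have eq: "(\<Sum>v\<in>UNIV. D v * K v w) - p w = (\<Sum>v\<in>UNIV. (D v - p v) * (K v w - p w))" for w
  proof -
    have "(\<Sum>v\<in>UNIV. (D v - p v) * (K v w - p w)) =
      (\<Sum>v\<in>UNIV. D v * K v w) - (\<Sum>v\<in>UNIV. p v * K v w) - (\<Sum>v\<in>UNIV. D v) * p w + (\<Sum>v\<in>UNIV. p v) * p w"
      by (simp add: left_diff_distrib right_diff_distrib sum_subtractf sum.distrib sum_distrib_right)
    then show ?thesis using stat[of w] sD sp by simp
  qed
  have "(\<Sum>w\<in>UNIV. \<bar>(\<Sum>v\<in>UNIV. D v * K v w) - p w\<bar>) \<le> (\<Sum>w\<in>UNIV. \<Sum>v\<in>UNIV. \<bar>D v - p v\<bar> * \<bar>K v w - p w\<bar>)"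
    unfolding eq by (rule sum_mono) (metis (no_types, lifting) abs_mult sum.cong sum_abs)
  also have "\<dots> = (\<Sum>v\<in>UNIV. \<bar>D v - p v\<bar> * (\<Sum>w\<in>UNIV. \<bar>K v w - p w\<bar>))"
    by (subst sum.swap) (simp add: sum_distrib_left)
  also have "\<dots> \<le> (\<Sum>v\<in>UNIV. \<bar>D v - p v\<bar> * e)"
    by (rule sum_mono) (simp add: mult_left_mono tvK)
  finally show ?thesis by (simp add: sum_distrib_left mult.commute)
qed

theorem mainTheorem10:
  fixes E :: "'v::finite \<Rightarrow> 'v \<Rightarrow> bool"
    and U :: "('a::finite \<times> 'v) \<Rightarrow> ('a \<times> 'v) \<Rightarrow> complex"
    and limd :: "'v \<Rightarrow> real"
    and \<epsilon> :: real and v0 :: 'v and k :: nat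
  assumes "simple_graph E"
    and "general_quantum_walk E U"
    and "\<And>a v w. (\<lambda>T. Pbar U T a v w) \<longlonglongrightarrow> limd w"
    and "\<epsilon> > 0"
    and "mixing_set U (\<lambda>a v. limd) \<epsilon> \<noteq> {}"
    and "k \<ge> 1"
  shows "tv (amp_dist U (mixing_time U (\<lambda>a v. limd) \<epsilon>) v0 k) limd \<le> \<epsilon> ^ k"
proof -
  have un: "unitary_mat U" using assms(2) unfolding general_quantum_walk_def by blast
  define M where "M = mixing_time U (\<lambda>a v. limd) \<epsilon>"
  define d where "d = real (card (UNIV::'a set))"
  define n where "n = real (card (UNIV::'v set))"
  have dpos: "d > 0" unfolding d_def by (simp add: card_gt_0_iff)
  have npos: "n > 0" unfolding n_def by (simp add: card_gt_0_iff)
  have "M \<in> mixing_set U (\<lambda>a v. limd) \<epsilon>"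
    unfolding M_def mixing_time_def using assms(5) by (metis LeastI_ex ex_in_conv)
  then have M1: "M \<ge> 1" and mixM: "\<And>a v. tv limd (Pbar U M a v) \<le> \<epsilon>"
    unfolding mixing_set_def by auto
  have limval: "limd w = 1 / n" for w
  proof -
    have "(\<lambda>T. \<Sum>a\<in>UNIV. \<Sum>v\<in>UNIV. Pbar U T a v w) \<longlonglongrightarrow> (\<Sum>a\<in>(UNIV::'a set). \<Sum>v\<in>(UNIV::'v set). limd w)"
      by (intro tendsto_sum assms(3))
    moreover have "(\<lambda>T. \<Sum>a\<in>UNIV. \<Sum>v\<in>UNIV. Pbar U T a v w) \<longlonglongrightarrow> d"
    proof (rule Lim_transform_eventually[OF tendsto_const])
      show "\<forall>\<^sub>F T in sequentially. d = (\<Sum>a\<in>UNIV. \<Sum>v\<in>UNIV. Pbar U T a v w)"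
        using Pbar_colsum[OF un] unfolding d_def eventually_sequentially by (metis)
    qed
    ultimately have "d * n * limd w = d"
      using LIMSEQ_unique unfolding d_def n_def by fastforce
    then show ?thesis using dpos npos by (simp add: field_simps)
  qed
  have Kdef: "amp_kernel U M v w = (\<Sum>a\<in>UNIV. Pbar U M a v w) / d" for v w
    unfolding amp_kernel_def Pbar_def d_def by (simp add: sum_distrib_left sum_divide_distrib mult.commute)
  have Krow: "(\<Sum>w\<in>UNIV. amp_kernel U M v w) = 1" for v
    unfolding Kdef using Pbar_sum1[OF un M1] dpos
    by (simp add: sum_divide_distrib[symmetric] d_def) (subst sum.swap, simp)
  have Kstat: "(\<Sum>v\<in>UNIV. limd v * amp_kernel U M v w) = limd w" for w
  proof -
    have "(\<Sum>v\<in>UNIV. limd v * amp_kernel U M v w) = (\<Sum>a\<in>UNIV. \<Sum>v\<in>UNIV. Pbar U M a v w) / (n * d)"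
      unfolding Kdef limval by (simp add: sum_divide_distrib[symmetric] sum_distrib_left) (subst sum.swap, simp)
    also have "\<dots> = 1 / n" using Pbar_colsum[OF un M1] dpos npos unfolding d_def[symmetric] by simp
    finally show ?thesis using limval by simp
  qed
  have sp: "(\<Sum>v\<in>UNIV. limd v) = 1" using limval npos unfolding n_def by simp
  have Ktv: "(\<Sum>w\<in>UNIV. \<bar>amp_kernel U M v w - limd w\<bar>) \<le> \<epsilon>" for v
  proof -
    have fw: "amp_kernel U M v w - limd w = (\<Sum>a\<in>UNIV. Pbar U M a v w - limd w) / d" for w
      unfolding Kdef using dpos by (simp add: sum_subtractf d_def field_simps)
    then have "(\<Sum>w\<in>UNIV. \<bar>amp_kernel U M v w - limd w\<bar>) = (\<Sum>w\<in>UNIV. \<bar>\<Sum>a\<in>UNIV. Pbar U M a v w - limd w\<bar> / d)"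
      by (intro sum.cong refl) (simp only: fw abs_divide abs_of_pos[OF dpos])
    also have "\<dots> = (\<Sum>w\<in>UNIV. \<bar>\<Sum>a\<in>UNIV. Pbar U M a v w - limd w\<bar>) / d"
      by (rule sum_divide_distrib[symmetric])
    also have "\<dots> \<le> (\<Sum>w\<in>UNIV. \<Sum>a\<in>UNIV. \<bar>Pbar U M a v w - limd w\<bar>) / d"
      using dpos by (intro divide_right_mono sum_mono sum_abs) auto
    also have "\<dots> = (\<Sum>a\<in>UNIV. tv limd (Pbar U M a v)) / d"
      unfolding tv_def by (subst sum.swap) (simp add: abs_minus_commute)
    also have "\<dots> \<le> (\<Sum>a\<in>(UNIV::'a set). \<epsilon>) / d"
      using dpos by (intro divide_right_mono sum_mono mixM) auto
    also have "\<dots> = \<epsilon>" using dpos unfolding d_def by simp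
    finally show ?thesis .
  qed
  have sD: "(\<Sum>w\<in>UNIV. amp_dist U M v0 j w) = 1" for j
  proof (induction j)
    case 0 then show ?case by simp
  next
    case (Suc j)
    have "(\<Sum>w\<in>UNIV. amp_dist U M v0 (Suc j) w) = (\<Sum>v\<in>UNIV. amp_dist U M v0 j v * (\<Sum>w\<in>UNIV. amp_kernel U M v w))"
      by (simp add: sum_distrib_left) (rule sum.swap)
    then show ?case using Suc Krow by simp
  qed
  have main: "tv (amp_dist U M v0 (Suc j)) limd \<le> \<epsilon> ^ Suc j" for j
  proof (induction j)
    case 0
    have "amp_dist U M v0 (Suc 0) = amp_kernel U M v0"
    proof (rule ext)
      fix x
      have "\<And>v. (if v = v0 then 1 else 0) * amp_kernel U M v x = (if v = v0 then amp_kernel U M v0 x else 0)"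
        by simp
      then show "amp_dist U M v0 (Suc 0) x = amp_kernel U M v0 x" by simp
    qed
    then show ?case using Ktv[of v0] unfolding tv_def by simp
  next
    case (Suc j)
    have "tv (amp_dist U M v0 (Suc (Suc j))) limd \<le> \<epsilon> * tv (amp_dist U M v0 (Suc j)) limd"
      unfolding tv_def amp_dist.simps(2)[of U M v0 "Suc j"]
      by (rule contract[OF Kstat Ktv sD sp])
    also have "\<dots> \<le> \<epsilon> * \<epsilon> ^ Suc j"
      using Suc assms(4) by (intro mult_left_mono) auto
    finally show ?case by simp
  qed
  obtain j where "k = Suc j" using assms(6) by (cases k) auto
  then show ?thesis using main unfolding M_def by simp
qed

end
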